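(* Let $G=(V,E)$ be an undirected graph with $n$ vertices and positive integer vertex weights, let $OPT$ be the minimum weight of a vertex cover and $W_{max}$ the maximum vertex weight. The expected number of iterations of Global SEMO (with the standard mutation operator and fitness $f(x)=(Cost(x),LP(x))$) until its population $P$ contains a $2$-approximation, i.e. a vertex cover of weight at most $2\cdot OPT$, is $O(OPT\cdot n(\log W_{max}+\log n))$.
   Context: Weighted vertex cover: $G=(V,E)$ with $V=\{v_1,\dots,v_n\}$ and weight function $w:V\to\mathbb{N}^+$ (positive integers). A vertex cover is a set $C\subseteq V$ such that every edge has an endpoint in $C$. Search points are $x\in\{0,1\}^n$, where $v_i$ is selected iff $x_i=1$. $Cost(x)=\sum_{i=1}^n w(v_i)x_i$. $G(x)=(V(x),E(x))$ is obtained by deleting the selected vertices and all edges having a selected endpoint: $V(x)=V\setminus\{v_i:x_i=1\}$, $E(x)=\{e\in E: e\cap\{v_i:x_i=1\}=\emptyset\}$. $LP(x)$ is the optimal value of the linear program: minimize $\sum_{v_i\in V(x)} w(v_i)y_i$ subject to $y_i+y_j\ge 1$ for all $\{v_i,v_j\}\in E(x)$ and $0\le y_i\le 1$ (so $LP(x)=0$ iff $x$ is a vertex cover). For vectors, $f(x)\le f(y)$ means componentwise $\le$ (both objectives minimized). Global SEMO: choose $x\in\{0,1\}^n$ uniformly at random and set $P=\{x\}$. In each iteration: choose $x\in P$ uniformly at random; create $x'$ by flipping each bit of $x$ independently with probability $1/n$ (standard mutation); if there is no $y\in P$ with $f(y)\le f(x')$, add $x'$ to $P$ and delete all other $z\in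 P$ with $f(x')\le f(z)$. Time is measured as the number of iterations. *)

theory Defs
  imports "HOL-Probability.Probability"
begin

text \<open>Vertices are 0,...,n-1; search points are bool lists of length n (x ! i iff v_i selected).
Edges are 2-element sets of vertices.\<close>

definition wf_graph :: "nat \<Rightarrow> nat set set \<Rightarrow> (nat \<Rightarrow> nat) \<Rightarrow> bool" where
  "wf_graph n E w \<longleftrightarrow> (\<forall>e\<in>E. \<exists>i j. e = {i, j} \<and> i \<noteq> j \<and> i < n \<and> j < n)
                      \<and> (\<forall>i<n. w i > 0)"

definition cost :: "nat \<Rightarrow> (nat \<Rightarrow> nat) \<Rightarrow> bool list \<Rightarrow> nat" where
  "cost n w x = (\<Sum>i<n. w i * (if x ! i then 1 else 0))"

definition is_vc :: "nat \<Rightarrow> nat set set \<Rightarrow> bool list \<Rightarrow> bool" where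
  "is_vc n E x \<longleftrightarrow> (\<forall>e\<in>E. \<exists>i\<in>e. i < n \<and> x ! i)"

text \<open>Optimal value of the LP relaxation of the residual graph G(x).\<close>
definition LP :: "nat \<Rightarrow> nat set set \<Rightarrow> (nat \<Rightarrow> nat) \<Rightarrow> bool list \<Rightarrow> real" where
  "LP n E w x = Inf {(\<Sum>i\<in>{i. i < n \<and> \<not> x ! i}. real (w i) * y i) | y.
       (\<forall>i<n. 0 \<le> y i \<and> y i \<le> 1) \<and>
       (\<forall>i j. {i, j} \<in> E \<and> i < n \<and> j < n \<and> \<not> x ! i \<and> \<not> x ! j \<longrightarrow> y i + y j \<ge> 1)}"

definition weakly_dom :: "nat \<Rightarrow> nat set set \<Rightarrow> (nat \<Rightarrow> nat) \<Rightarrow> bool list \<Rightarrow> bool list \<Rightarrow> bool" where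
  "weakly_dom n E w y x \<longleftrightarrow> cost n w y \<le> cost n w x \<and> LP n E w y \<le> LP n E w x"

fun mutate :: "real \<Rightarrow> bool list \<Rightarrow> bool list pmf" where
  "mutate p [] = return_pmf []"
| "mutate p (b # bs) =
     bind_pmf (bernoulli_pmf p) (\<lambda>c. map_pmf (\<lambda>r. (if c then \<not> b else b) # r) (mutate p bs))"

definition semo_step :: "nat \<Rightarrow> nat set set \<Rightarrow> (nat \<Rightarrow> nat) \<Rightarrow> bool list set \<Rightarrow> bool list set pmf" where
  "semo_step n E w P =
     bind_pmf (pmf_of_set P) (\<lambda>x. map_pmf (\<lambda>x'.
        if (\<exists>y\<in>P. weakly_dom n E w y x') then P
        else insert x' {z\<in>P. \<not> weakly_dom n E w x' z}) (mutate (1 / real n) x))"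

definition OPT :: "nat \<Rightarrow> nat set set \<Rightarrow> (nat \<Rightarrow> nat) \<Rightarrow> nat" where
  "OPT n E w = Min {cost n w x | x. length x = n \<and> is_vc n E x}"

definition Wmax :: "nat \<Rightarrow> (nat \<Rightarrow> nat) \<Rightarrow> nat" where
  "Wmax n w = Max (w ` {..<n})"

definition hit :: "nat \<Rightarrow> nat set set \<Rightarrow> (nat \<Rightarrow> nat) \<Rightarrow> bool list set \<Rightarrow> bool" where
  "hit n E w P \<longleftrightarrow> (\<exists>x\<in>P. is_vc n E x \<and> cost n w x \<le> 2 * OPT n E w)"

fun semo_run :: "nat \<Rightarrow> nat set set \<Rightarrow> (nat \<Rightarrow> nat) \<Rightarrow> nat \<Rightarrow> bool list set pmf" where
  "semo_run n E w 0 = map_pmf (\<lambda>x. {x}) (pmf_of_set {x. length x = n})"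
| "semo_run n E w (Suc t) =
     bind_pmf (semo_run n E w t) (\<lambda>P. if hit n E w P then return_pmf P else semo_step n E w P)"

text \<open>Expected hitting time E[T] = sum over t of Pr[T > t].\<close>
definition expected_time :: "nat \<Rightarrow> nat set set \<Rightarrow> (nat \<Rightarrow> nat) \<Rightarrow> ennreal" where
  "expected_time n E w = (\<Sum>t. ennreal (measure_pmf.prob (semo_run n E w t) {P. \<not> hit n E w P}))"

end

theory Submission
  imports Defs
begin


lemma set_mutate: "set_pmf (mutate p x) \<subseteq> {l. length l = length x}"
  by (induction x) auto

lemma pmf_mutate:
  assumes "0 \<le> p" "p \<le> 1"
  shows "pmf (mutate p x) x' = (if length x' = length x then (\<Prod>i<length x. if x!i = x'!i then 1 - p else p) else 0)"
  using assms
proof (induction x arbitrary: x')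
  case Nil
  then show ?case by (auto simp: pmf_return)
next
  case (Cons b bs)
  have cons: "pmf (map_pmf (\<lambda>r. a # r) M) y = (case y of [] \<Rightarrow> 0 | c # r \<Rightarrow> if c = a then pmf M r else 0)" for a M y
  proof (cases y)
    case Nil
    then show ?thesis by (auto simp: pmf_eq_0_set_pmf)
  next
    case (Cons c r)
    show ?thesis
    proof (cases "c = a")
      case True
      then show ?thesis using Cons pmf_map_inj'[of "Cons a" M r] by (auto simp: inj_def)
    next
      case False
      then show ?thesis using Cons by (auto simp: pmf_eq_0_set_pmf)
    qed
  qed
  show ?case
  proof (cases x')
    case Nil
    then show ?thesis using Cons.prems by (simp add: pmf_bind cons)
  next
    case (Cons c r)
    have "pmf (mutate p (b # bs)) x' = (if c = (\<not> b) then pmf (mutate p bs) r else 0) * p + (if c = b then pmf (mutate p bs) r else 0) * (1 - p)"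
      using Cons Cons.prems by (simp add: pmf_bind cons)
    also have "\<dots> = (if c = b then 1 - p else p) * pmf (mutate p bs) r" by auto
    also have "\<dots> = (if length x' = length (b # bs) then (\<Prod>i<length (b#bs). if (b#bs)!i = x'!i then 1 - p else p) else 0)"
      using Cons Cons.IH[of r] Cons.prems by (simp del: prod.lessThan_Suc add: prod.lessThan_Suc_shift)
    finally show ?thesis .
  qed
qed

lemma pmf_mutate_flip:
  assumes "0 \<le> p" "p \<le> 1" "i < length x"
  shows "pmf (mutate p x) (x[i := \<not> x!i]) = p * (1 - p) ^ (length x - 1)"
proof -
  have "pmf (mutate p x) (x[i := \<not> x!i]) = (\<Prod>j<length x. if j = i then p else 1 - p)"
    using assms by (simp add: pmf_mutate nth_list_update) (intro prod.cong, auto)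
  also have "\<dots> = p * (\<Prod>j\<in>{..<length x} - {i}. 1 - p)"
    using assms by (subst prod.remove[of _ i]) auto
  also have "\<dots> = p * (1 - p) ^ (length x - 1)" using assms by simp
  finally show ?thesis .
qed

lemma one_minus_pow_ge:
  assumes "n \<ge> (2::nat)"
  shows "(1 - 1 / real n) ^ (n - 1) \<ge> exp (-1)"
proof -
  define m where "m = n - 1"
  have m: "m \<ge> 1" "real n = real m + 1" using assms by (auto simp: m_def)
  have "(1 + 1 / real m) ^ m \<le> exp (1 / real m) ^ m"
    by (intro power_mono) (auto simp: exp_ge_add_one_self[of "1/real m", simplified add.commute])
  also have "\<dots> = exp 1" using m by (simp add: exp_of_nat_mult[symmetric])
  finally have A: "(1 + 1 / real m) ^ m \<le> exp 1" .
  have B: "1 - 1 / real n = inverse (1 + 1 / real m)" using m by (simp add: field_simps)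
  have "exp (-1::real) = inverse (exp 1)" using exp_minus[of "1::real"] by simp
  also have "\<dots> \<le> inverse ((1 + 1 / real m) ^ m)"
    using A by (intro le_imp_inverse_le) (auto intro!: zero_less_power simp: add_pos_nonneg)
  also have "\<dots> = (1 - 1 / real n) ^ (n - 1)" using B by (simp add: m_def power_inverse)
  finally show ?thesis .
qed


locale wvc =
  fixes n :: nat and E :: "nat set set" and w :: "nat \<Rightarrow> nat"
  assumes wf: "wf_graph n E w" and ne: "E \<noteq> {}"
begin

definition feas :: "bool list \<Rightarrow> (nat \<Rightarrow> real) \<Rightarrow> bool" where
  "feas x y \<longleftrightarrow> (\<forall>i<n. 0 \<le> y i \<and> y i \<le> 1) \<and>
       (\<forall>i j. {i, j} \<in> E \<and> i < n \<and> j < n \<and> \<not> x ! i \<and> \<not> x ! j \<longrightarrow> y i + y j \<ge> 1)"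

definition U :: "bool list \<Rightarrow> nat set" where "U x = {i. i < n \<and> \<not> x ! i}"

definition obj :: "bool list \<Rightarrow> (nat \<Rightarrow> real) \<Rightarrow> real" where
  "obj x y = (\<Sum>i\<in>U x. real (w i) * y i)"

definition hi :: "(nat \<Rightarrow> real) \<Rightarrow> bool" where
  "hi y \<longleftrightarrow> (\<forall>i<n. y i = 0 \<or> y i = 1/2 \<or> y i = 1)"

definition Fr :: "(nat \<Rightarrow> real) \<Rightarrow> nat set" where
  "Fr y = {i. i < n \<and> y i \<noteq> 0 \<and> y i \<noteq> 1/2 \<and> y i \<noteq> 1}"

lemma finite_U[simp]: "finite (U x)" by (simp add: U_def)
lemma finite_Fr[simp]: "finite (Fr y)" by (simp add: Fr_def)

lemma LP_alt: "LP n E w x = Inf {obj x y | y. feas x y}"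
  unfolding LP_def obj_def feas_def U_def by simp

lemma w_pos: "i < n \<Longrightarrow> w i > 0" using wf by (simp add: wf_graph_def)

lemma obj_nonneg: "feas x y \<Longrightarrow> obj x y \<ge> 0"
  unfolding obj_def feas_def U_def by (intro sum_nonneg) auto

lemma round:
  assumes "feas x y"
  shows "\<exists>y'. feas x y' \<and> hi y' \<and> obj x y' \<le> obj x y"
  using assms
proof (induction "card (Fr y)" arbitrary: y rule: less_induct)
  case less
  note fy = less.prems
  show ?case
  proof (cases "Fr y = {}")
    case True
    then have "hi y" by (auto simp: hi_def Fr_def)
    then show ?thesis using fy by blast
  next
    case False
    define m where "m = Max ((\<lambda>i. \<bar>y i - 1/2\<bar>) ` Fr y)"
    have Fr_prop: "0 < \<bar>y i - 1/2\<bar> \<and> \<bar>y i - 1/2\<bar> < 1/2" if "i \<in> Fr y" for i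
    proof -
      have "0 \<le> y i" "y i \<le> 1" "y i \<noteq> 0" "y i \<noteq> 1/2" "y i \<noteq> 1"
        using that fy by (auto simp: Fr_def feas_def)
      then show ?thesis by (auto simp: abs_if)
    qed
    have nFr: "y i - 1/2 = -1/2 \<or> y i - 1/2 = 0 \<or> y i - 1/2 = 1/2" if "i < n" "i \<notin> Fr y" for i
      using that by (auto simp: Fr_def)
    have m_ge: "\<bar>y i - 1/2\<bar> \<le> m" if "i \<in> Fr y" for i
      unfolding m_def using that by (intro Max_ge) auto
    obtain i0 where i0: "i0 \<in> Fr y" "\<bar>y i0 - 1/2\<bar> = m"
    proof -
      have "m \<in> (\<lambda>i. \<bar>y i - 1/2\<bar>) ` Fr y"
        unfolding m_def using False by (intro Max_in) auto
      then show ?thesis using that by auto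
    qed
    have m_pos: "0 < m" "m < 1/2" using Fr_prop[OF i0(1)] i0(2) by auto
    define ys where "ys = (\<lambda>(l::real) i. if i \<in> Fr y then 1/2 + l * (y i - 1/2) else y i)"
    have feas_ys: "feas x (ys l)" if l: "0 \<le> l" "l * m \<le> 1/2" for l
    proof -
      have bnd: "\<bar>l * (y i - 1/2)\<bar> \<le> 1/2" if "i \<in> Fr y" for i
      proof -
        have "\<bar>l * (y i - 1/2)\<bar> = l * \<bar>y i - 1/2\<bar>" using l by (simp add: abs_mult)
        also have "\<dots> \<le> l * m" using m_ge[OF that] l by (intro mult_left_mono) auto
        finally show ?thesis using l by linarith
      qed
      have A: "\<forall>i<n. 0 \<le> ys l i \<and> ys l i \<le> 1"
      proof (intro allI impI)
        fix i assume "i < n"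
        show "0 \<le> ys l i \<and> ys l i \<le> 1"
        proof (cases "i \<in> Fr y")
          case True then show ?thesis using bnd[OF True] by (auto simp: ys_def abs_le_iff)
        next
          case False then show ?thesis using fy \<open>i < n\<close> by (auto simp: ys_def feas_def)
        qed
      qed
      have B: "ys l i + ys l j \<ge> 1" if e: "{i, j} \<in> E" "i < n" "j < n" "\<not> x ! i" "\<not> x ! j" for i j
      proof -
        have s: "(y i - 1/2) + (y j - 1/2) \<ge> 0" using fy e unfolding feas_def by auto
        have key: "l * a + b \<ge> 0" if "a + b \<ge> 0" "\<bar>a\<bar> \<le> m" "0 < \<bar>a\<bar>" "\<bar>a\<bar> < 1/2"
             "b = -1/2 \<or> b = 0 \<or> b = 1/2" for a b
        proof -
          have "\<bar>l * a\<bar> \<le> 1/2"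
          proof -
            have "\<bar>l * a\<bar> = l * \<bar>a\<bar>" using l by (simp add: abs_mult)
            also have "\<dots> \<le> l * m" using that l by (intro mult_left_mono) auto
            finally show ?thesis using l by linarith
          qed
          moreover have "b = 0 \<Longrightarrow> l * a \<ge> 0" using that l by auto
          ultimately show ?thesis using that by (auto simp: abs_le_iff)
        qed
        show ?thesis
        proof (cases "i \<in> Fr y"; cases "j \<in> Fr y")
          assume "i \<in> Fr y" "j \<in> Fr y"
          then have "l * (y i - 1/2) + l * (y j - 1/2) \<ge> 0"
            using s l by (simp add: distrib_left[symmetric])
          then show ?thesis using \<open>i \<in> Fr y\<close> \<open>j \<in> Fr y\<close> by (simp add: ys_def)
        next
          assume "i \<in> Fr y" "j \<notin> Fr y"
          then have "l * (y i - 1/2) + (y j - 1/2) \<ge> 0"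
            using key[of "y i - 1/2" "y j - 1/2"] s m_ge Fr_prop nFr e by auto
          then show ?thesis using \<open>i \<in> Fr y\<close> \<open>j \<notin> Fr y\<close> by (simp add: ys_def)
        next
          assume "i \<notin> Fr y" "j \<in> Fr y"
          then have "l * (y j - 1/2) + (y i - 1/2) \<ge> 0"
            using key[of "y j - 1/2" "y i - 1/2"] s m_ge Fr_prop nFr e by auto
          then show ?thesis using \<open>i \<notin> Fr y\<close> \<open>j \<in> Fr y\<close> by (simp add: ys_def)
        next
          assume "i \<notin> Fr y" "j \<notin> Fr y"
          then show ?thesis using s by (simp add: ys_def)
        qed
      qed
      show ?thesis using A B unfolding feas_def by blast
    qed
    define s where "s = (\<Sum>i\<in>U x. real (w i) * (if i \<in> Fr y then y i - 1/2 else 0))"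
    have obj_ys: "obj x (ys l) = obj x (ys 0) + l * s" for l
      unfolding obj_def s_def sum_distrib_left sum.distrib[symmetric]
      by (intro sum.cong) (auto simp: ys_def algebra_simps)
    have ys1: "ys 1 = y" by (auto simp: ys_def fun_eq_iff)
    show ?thesis
    proof (cases "s \<ge> 0")
      case True
      have "hi (ys 0)" using nFr by (fastforce simp: hi_def ys_def)
      moreover have "obj x (ys 0) \<le> obj x y" using obj_ys[of 1] True ys1 by simp
      ultimately show ?thesis using feas_ys[of 0] m_pos by auto
    next
      case False
      define L where "L = 1 / (2 * m)"
      have L: "L \<ge> 1" "0 \<le> L" "L * m = 1/2" using m_pos by (auto simp: L_def field_simps)
      have "Fr (ys L) \<subseteq> Fr y - {i0}"
      proof
        fix i assume i: "i \<in> Fr (ys L)"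
        show "i \<in> Fr y - {i0}"
        proof (cases "i \<in> Fr y")
          case True
          have "i \<noteq> i0"
          proof
            assume "i = i0"
            then have "ys L i = 1/2 + L * (y i0 - 1/2)" using i0 by (simp add: ys_def)
            moreover have "L * (y i0 - 1/2) = 1/2 \<or> L * (y i0 - 1/2) = -1/2"
            proof (cases "y i0 \<ge> 1/2")
              case True then have "y i0 - 1/2 = m" using i0(2) by auto
              then show ?thesis using L(3) by simp
            next
              case False then have "y i0 - 1/2 = - m" using i0(2) by auto
              then show ?thesis using L(3) by simp
            qed
            ultimately show False using i by (auto simp: Fr_def)
          qed
          then show ?thesis using True by auto
        next
          case False
          then show ?thesis using i by (auto simp: Fr_def ys_def)
        qed
      qed
      then have "card (Fr (ys L)) < card (Fr y)"
      proof -
        have "Fr (ys L) \<subset> Fr y" using \<open>Fr (ys L) \<subseteq> Fr y - {i0}\<close> i0(1) by blast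
        then show ?thesis by (intro psubset_card_mono) auto
      qed
      from less.hyps[OF this feas_ys[OF L(2) ] ] L(3)
      obtain y' where y': "feas x y'" "hi y'" "obj x y' \<le> obj x (ys L)" by auto
      have "L * s \<le> 1 * s" using False L(1) by (intro mult_right_mono_neg) auto
      then have "obj x (ys L) \<le> obj x y" using obj_ys[of L] obj_ys[of 1] ys1 by simp
      then show ?thesis using y' by auto
    qed
  qed
qed


abbreviation "lp \<equiv> LP n E w"

lemma feas_one: "feas x (\<lambda>_. 1)" by (simp add: feas_def)

lemma LP_le: "feas x y \<Longrightarrow> lp x \<le> obj x y"
  unfolding LP_alt by (rule cInf_lower) (auto intro!: bdd_belowI[of _ 0] obj_nonneg)

lemma obj_half:
  assumes "hi y" shows "\<exists>k::nat. obj x y = real k / 2 \<and> k \<le> 2 * (\<Sum>i<n. w i)"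
proof -
  define c where "c i = (if y i = 0 then 0 else if y i = 1/2 then 1 else (2::nat))" for i
  have c: "y i = real (c i) / 2" "c i \<le> 2" if "i < n" for i
    using assms that by (auto simp: hi_def c_def)
  have "obj x y = (\<Sum>i\<in>U x. real (w i * c i) / 2)"
    unfolding obj_def by (intro sum.cong) (auto simp: U_def c)
  also have "\<dots> = real (\<Sum>i\<in>U x. w i * c i) / 2"
    by (simp add: sum_divide_distrib)
  finally have 1: "obj x y = real (\<Sum>i\<in>U x. w i * c i) / 2" .
  have "(\<Sum>i\<in>U x. w i * c i) \<le> (\<Sum>i\<in>U x. w i * 2)"
    by (intro sum_mono) (auto simp: U_def c)
  also have "\<dots> \<le> (\<Sum>i<n. w i * 2)"
    by (intro sum_mono2) (auto simp: U_def)
  finally have "(\<Sum>i\<in>U x. w i * c i) \<le> 2 * (\<Sum>i<n. w i)"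
    by (simp add: sum_distrib_right[symmetric] mult.commute)
  then show ?thesis using 1 by blast
qed

lemma LP_attain: "\<exists>y. feas x y \<and> hi y \<and> lp x = obj x y"
proof -
  define V where "V = {obj x y | y. feas x y \<and> hi y}"
  have "V \<subseteq> (\<lambda>k. real k / 2) ` {..2 * (\<Sum>i<n. w i)}"
    unfolding V_def using obj_half by fastforce
  then have fin: "finite V" by (rule finite_subset) auto
  have "hi (\<lambda>_. 1)" by (simp add: hi_def)
  then have nem: "V \<noteq> {}" using feas_one unfolding V_def by blast
  have mV: "Min V \<in> V" using fin nem by simp
  have "Inf {obj x y | y. feas x y} = Min V"
  proof (rule cInf_eq_minimum)
    show "Min V \<in> {obj x y | y. feas x y}" using mV unfolding V_def by auto
  next
    fix z assume "z \<in> {obj x y | y. feas x y}"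
    then obtain y where y: "feas x y" "z = obj x y" by auto
    obtain y' where "feas x y'" "hi y'" "obj x y' \<le> obj x y" using round[OF y(1)] by blast
    then have "Min V \<le> obj x y'" using fin unfolding V_def by (intro Min_le) auto
    then show "Min V \<le> z" using y \<open>obj x y' \<le> obj x y\<close> by simp
  qed
  then show ?thesis using mV unfolding V_def LP_alt by auto
qed

lemma LP_half: "\<exists>k::nat. lp x = real k / 2"
  using LP_attain[of x] obj_half by metis

lemma LP_nonneg: "lp x \<ge> 0"
  using LP_attain[of x] obj_nonneg by metis

lemma LP_mono:
  assumes "\<forall>i<n. x ! i \<longrightarrow> x' ! i" shows "lp x' \<le> lp x"
proof -
  obtain y where y: "feas x y" "lp x = obj x y" using LP_attain by blast
  have f: "feas x' y" using y(1) assms unfolding feas_def by blast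
  have "obj x' y \<le> obj x y"
    unfolding obj_def using y(1) assms
    by (intro sum_mono2) (auto simp: U_def feas_def)
  then show ?thesis using LP_le[OF f] y by simp
qed

lemma LP_le_LP0: "lp x \<le> lp (replicate n False)"
  by (rule LP_mono) simp

lemma LP_add:
  assumes "length x = n" "v < n" "\<not> x ! v" "feas x y"
  shows "lp (x[v := True]) \<le> obj x y - real (w v) * y v"
proof -
  have f: "feas (x[v := True]) y" using assms unfolding feas_def by (auto simp: nth_list_update)
  have U: "U (x[v := True]) = U x - {v}" using assms by (auto simp: U_def nth_list_update)
  have "obj (x[v := True]) y = obj x y - real (w v) * y v"
    unfolding obj_def U using assms by (subst sum_diff1) (auto simp: U_def)
  then show ?thesis using LP_le[OF f] by simp
qed

lemma edge: "e \<in> E \<Longrightarrow> \<exists>i j. e = {i, j} \<and> i \<noteq> j \<and> i < n \<and> j < n"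
  using wf by (auto simp: wf_graph_def)

lemma n_ge2: "n \<ge> 2"
proof -
  obtain e where "e \<in> E" using ne by auto
  then obtain i j where "i \<noteq> j" "i < n" "j < n" using edge by blast
  then show ?thesis by linarith
qed

lemma LP_zero_vc:
  assumes "lp x = 0" shows "is_vc n E x"
  unfolding is_vc_def
proof
  fix e assume "e \<in> E"
  then obtain i j where e: "e = {i, j}" "i \<noteq> j" "i < n" "j < n" using edge by blast
  show "\<exists>i\<in>e. i < n \<and> x ! i"
  proof (rule ccontr)
    assume "\<not> ?thesis"
    then have u: "\<not> x ! i" "\<not> x ! j" using e by auto
    obtain y where y: "feas x y" "lp x = obj x y" using LP_attain by blast
    have nn: "\<forall>k\<in>U x. 0 \<le> real (w k) * y k" using y(1) by (auto simp: feas_def U_def)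
    have "(\<Sum>k\<in>U x. real (w k) * y k) = 0" using y assms by (simp add: obj_def)
    then have z: "\<forall>k\<in>U x. real (w k) * y k = 0" using nn by (simp add: sum_nonneg_eq_0_iff)
    have "y i = 0" "y j = 0" using z u e w_pos[of i] w_pos[of j] by (auto simp: U_def)
    moreover have "y i + y j \<ge> 1" using y(1) u e \<open>e \<in> E\<close> by (auto simp: feas_def)
    ultimately show False by simp
  qed
qed

lemma cost_le: "cost n w x \<le> (\<Sum>i<n. w i)"
  unfolding cost_def by (intro sum_mono) auto

definition Wm where "Wm = Wmax n w"

lemma w_le: "i < n \<Longrightarrow> w i \<le> Wm"
  unfolding Wm_def Wmax_def by (intro Max_ge) auto

lemma sumw_le: "(\<Sum>i<n. w i) \<le> n * Wm"
proof -
  have "(\<Sum>i<n. w i) \<le> (\<Sum>i<n. Wm)" by (intro sum_mono) (auto intro: w_le)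
  then show ?thesis by simp
qed

lemma Wm_pos: "Wm \<ge> 1"
  using w_le[of 0] w_pos[of 0] n_ge2 by linarith

definition VCs where "VCs = {cost n w x | x. length x = n \<and> is_vc n E x}"

lemma VCs_fin: "finite VCs"
proof -
  have "VCs = (cost n w) ` {x. length x = n \<and> is_vc n E x}" unfolding VCs_def by auto
  moreover have "finite {x::bool list. length x = n}"
    using finite_lists_length_eq[of "UNIV::bool set" n] by simp
  ultimately show ?thesis by (metis (no_types, lifting) finite_imageI finite_subset mem_Collect_eq subsetI)
qed


lemma vc_true: "is_vc n E (replicate n True)"
  unfolding is_vc_def using edge by fastforce

lemma VCs_ne: "cost n w (replicate n True) \<in> VCs"
  using vc_true unfolding VCs_def by auto

lemma OPT_in: "OPT n E w \<in> VCs"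
  unfolding OPT_def VCs_def[symmetric] using VCs_fin VCs_ne
  by (intro Min_in) auto

lemma OPT_le: "OPT n E w \<le> n * Wm"
proof -
  have "OPT n E w \<le> cost n w (replicate n True)"
    unfolding OPT_def VCs_def[symmetric] using VCs_fin VCs_ne by (intro Min_le) auto
  then show ?thesis using cost_le sumw_le le_trans by blast
qed

lemma vc_cost_pos: "length x = n \<Longrightarrow> is_vc n E x \<Longrightarrow> cost n w x \<ge> 1"
proof -
  assume l: "length x = n" and vc: "is_vc n E x"
  obtain e where "e \<in> E" using ne by auto
  then obtain i where i: "i < n" "x ! i" using vc unfolding is_vc_def by blast
  have "w i * (if x ! i then 1 else 0) \<le> cost n w x"
    unfolding cost_def using i by (intro member_le_sum) auto
  then show ?thesis using i w_pos[of i] by simp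
qed

lemma OPT_pos: "OPT n E w \<ge> 1"
  using OPT_in vc_cost_pos unfolding VCs_def by auto

lemma LP0_le_OPT: "lp (replicate n False) \<le> real (OPT n E w)"
proof -
  obtain x where x: "length x = n" "is_vc n E x" "cost n w x = OPT n E w"
    using OPT_in unfolding VCs_def by auto
  define y where "y i = (if x ! i then 1 else 0::real)" for i
  have f: "feas (replicate n False) y"
    unfolding feas_def
  proof (intro conjI allI impI)
    fix i j assume "{i, j} \<in> E \<and> i < n \<and> j < n \<and> \<not> replicate n False ! i \<and> \<not> replicate n False ! j"
    then have "{i, j} \<in> E" by auto
    then obtain k where "k \<in> {i, j}" "x ! k" using x(2) unfolding is_vc_def by blast
    then show "1 \<le> y i + y j" by (auto simp: y_def)
  qed (auto simp: y_def)
  have "obj (replicate n False) y = real (cost n w x)"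
    unfolding obj_def cost_def U_def by (simp add: y_def of_nat_sum) (intro sum.cong, auto)
  then show ?thesis using LP_le[OF f] x(3) by simp
qed

lemma cost_set_true:
  assumes "length x = n" "v < n" "\<not> x ! v"
  shows "cost n w (x[v := True]) = cost n w x + w v"
proof -
  have "cost n w (x[v := True]) = (\<Sum>i<n. w i * (if x ! i then 1 else 0)) + w v * 1 - w v * 0"
    unfolding cost_def using assms
    by (simp add: nth_list_update sum.remove[of "{..<n}" v] cong: if_cong)
  then show ?thesis by (simp add: cost_def)
qed

lemma cost_set_false:
  assumes "length x = n" "v < n" "x ! v"
  shows "cost n w (x[v := False]) + w v = cost n w x"
proof -
  have "cost n w x = (\<Sum>i\<in>{..<n}-{v}. w i * (if x ! i then 1 else 0)) + w v"
    unfolding cost_def using assms by (simp add: sum.remove[of "{..<n}" v])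
  moreover have "cost n w (x[v := False]) = (\<Sum>i\<in>{..<n}-{v}. w i * (if x ! i then 1 else 0))"
    unfolding cost_def using assms by (simp add: nth_list_update sum.remove[of "{..<n}" v])
  ultimately show ?thesis by simp
qed

lemma cost_ones: "cost n w x = (\<Sum>i\<in>{i. i < n \<and> x ! i}. w i)"
  unfolding cost_def by (rule sum.mono_neutral_cong_right) auto

end


lemma exp_bound:
  fixes M :: "'a pmf" and g :: "'a \<Rightarrow> real"
  assumes fin: "finite (set_pmf M)" "finite I"
    and g: "\<forall>a\<in>set_pmf M. 0 \<le> g a \<and> g a \<le> c - (\<Sum>i\<in>I. if a = f i then d i else 0)"
  shows "(\<integral>\<^sup>+a. ennreal (g a) \<partial>M) \<le> ennreal (c - (\<Sum>i\<in>I. d i * pmf M (f i)))"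
    and "(\<Sum>i\<in>I. d i * pmf M (f i)) \<le> c"
proof -
  define S where "S = set_pmf M"
  have "(\<integral>\<^sup>+a. ennreal (g a) \<partial>M) = (\<Sum>a\<in>S. ennreal (g a) * ennreal (pmf M a))"
    unfolding S_def using fin by (intro nn_integral_measure_pmf_finite) auto
  also have "\<dots> = ennreal (\<Sum>a\<in>S. g a * pmf M a)"
    using g by (subst sum_ennreal[symmetric]) (auto simp: S_def ennreal_mult' intro!: sum.cong)
  finally have int: "(\<integral>\<^sup>+a. ennreal (g a) \<partial>M) = ennreal (\<Sum>a\<in>S. g a * pmf M a)" .
  have "(\<Sum>a\<in>S. g a * pmf M a) \<le> (\<Sum>a\<in>S. (c - (\<Sum>i\<in>I. if a = f i then d i else 0)) * pmf M a)"
    using g by (intro sum_mono mult_right_mono) (auto simp: S_def)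
  also have "\<dots> = c * (\<Sum>a\<in>S. pmf M a) - (\<Sum>i\<in>I. \<Sum>a\<in>S. if a = f i then d i * pmf M a else 0)"
    by (simp add: algebra_simps sum_distrib_left sum_distrib_right sum_subtractf sum.swap[of _ I S] if_distrib
        cong: if_cong)
  also have "(\<Sum>a\<in>S. pmf M a) = 1" unfolding S_def using fin by (intro sum_pmf_eq_1) auto
  also have "(\<Sum>i\<in>I. \<Sum>a\<in>S. if a = f i then d i * pmf M a else 0) = (\<Sum>i\<in>I. d i * pmf M (f i))"
  proof (intro sum.cong refl)
    fix i
    have "(\<Sum>a\<in>S. if a = f i then d i * pmf M a else 0) = (if f i \<in> S then d i * pmf M (f i) else 0)"
      using fin by (simp add: S_def sum.delta')
    also have "\<dots> = d i * pmf M (f i)" by (auto simp: S_def set_pmf_iff)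
    finally show "(\<Sum>a\<in>S. if a = f i then d i * pmf M a else 0) = d i * pmf M (f i)" .
  qed
  finally have le: "(\<Sum>a\<in>S. g a * pmf M a) \<le> c - (\<Sum>i\<in>I. d i * pmf M (f i))" by simp
  show "(\<integral>\<^sup>+a. ennreal (g a) \<partial>M) \<le> ennreal (c - (\<Sum>i\<in>I. d i * pmf M (f i)))"
    unfolding int by (rule ennreal_leI[OF le])
  have "0 \<le> (\<Sum>a\<in>S. g a * pmf M a)" using g by (intro sum_nonneg) (auto simp: S_def)
  then show "(\<Sum>i\<in>I. d i * pmf M (f i)) \<le> c" using le by simp
qed

lemma sum_bound:
  fixes p :: "nat \<Rightarrow> real" and K r d :: real
  assumes p: "\<And>t. 0 \<le> p t" "\<And>t. p t \<le> 1" "\<And>t. p t \<le> K * r ^ t"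
    and r: "r = 1 - d" "0 < d" "d \<le> 1" and K: "1 \<le> K"
  shows "(\<Sum>t. ennreal (p t)) \<le> ennreal (1 / d + ln K / d + 1)"
proof -
  define N where "N = nat \<lceil>ln K / d\<rceil>"
  define g where "g t = (if t < N then 1 else K * r ^ t)" for t
  have r0: "0 \<le> r" "r < 1" using r by auto
  have gs: "(\<lambda>t. g (t + N)) = (\<lambda>t. (K * r ^ N) * r ^ t)"
    by (auto simp: g_def power_add fun_eq_iff)
  have sumg: "summable g"
    using summable_iff_shift[of g N] gs r0 by (auto intro!: summable_mult)
  have pg: "p t \<le> g t" for t using p by (auto simp: g_def)
  have sump: "summable p"
    by (rule summable_comparison_test'[OF sumg, of 0]) (use p pg in auto)
  have eq: "(\<Sum>t. ennreal (p t)) = ennreal (\<Sum>t. p t)" using p sump by (intro suminf_ennreal2) auto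
  have "(\<Sum>t. p t) \<le> (\<Sum>t. g t)" using pg sump sumg by (intro suminf_le) auto
  also have "(\<Sum>t. g t) = (\<Sum>t. g (t + N)) + (\<Sum>t<N. g t)"
    using sumg by (rule suminf_split_initial_segment)
  also have "(\<Sum>t<N. g t) = real N" by (simp add: g_def)
  also have "(\<Sum>t. g (t + N)) = K * r ^ N * (1 / d)"
    unfolding gs using r0 r by (subst suminf_mult) (auto simp: suminf_geometric)
  also have "K * r ^ N \<le> 1"
  proof -
    have "r ^ N \<le> exp (- d) ^ N"
      using r r0 exp_ge_add_one_self[of "-d"] by (intro power_mono) auto
    also have "\<dots> = exp (- (d * real N))" by (simp add: exp_of_nat_mult[symmetric] algebra_simps)
    also have "\<dots> \<le> exp (- ln K)"
    proof -
      have "ln K / d \<le> real N" unfolding N_def by linarith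
      then have "ln K \<le> d * real N" using r by (simp add: field_simps)
      then show ?thesis by simp
    qed
    also have "\<dots> = 1 / K" using K by (simp add: exp_minus inverse_eq_divide)
    finally show ?thesis using K by (simp add: field_simps)
  qed
  also have "real N \<le> ln K / d + 1"
  proof -
    have "0 \<le> ln K / d" using K r by simp
    then show ?thesis unfolding N_def by linarith
  qed
  finally have "(\<Sum>t. p t) \<le> 1 / d + ln K / d + 1"
    using r by (simp add: divide_right_mono)
  then show ?thesis unfolding eq by (rule ennreal_leI)
qed

context wvc begin

abbreviation "Opt \<equiv> real (OPT n E w)"
abbreviation "wd \<equiv> weakly_dom n E w"
definition "LP0 = lp (replicate n False)"
definition "good x \<longleftrightarrow> real (cost n w x) + 2 * lp x \<le> 2 * Opt"
definition "h x = (if good x then lp x else LP0 + Opt * real (cost n w x))"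
definition "Inv P \<longleftrightarrow> finite P \<and> P \<noteq> {} \<and> (\<forall>x\<in>P. length x = n) \<and> (\<forall>a\<in>P. \<forall>b\<in>P. a \<noteq> b \<longrightarrow> \<not> wd a b)"
definition "Phi P = (if hit n E w P then 0 else Min (h ` P))"
definition "nextP P x' = (if \<exists>y\<in>P. wd y x' then P else insert x' {z\<in>P. \<not> wd x' z})"

lemma LP0_bnd: "0 \<le> LP0" "LP0 \<le> Opt" "lp x \<le> LP0"
  using LP_nonneg LP0_le_OPT LP_le_LP0 by (auto simp: LP0_def)

lemma h_nonneg: "h x \<ge> 0"
  using LP_nonneg[of x] LP0_bnd by (auto simp: h_def)

lemma h_mono: assumes "wd a b" shows "h a \<le> h b"
proof -
  have c: "cost n w a \<le> cost n w b" "lp a \<le> lp b" using assms by (auto simp: weakly_dom_def)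
  show ?thesis
  proof (cases "good b")
    case True
    then have "good a" using c unfolding good_def by linarith
    then show ?thesis using True c by (simp add: h_def)
  next
    case False
    have "lp a \<le> LP0 + Opt * real (cost n w b)"
      using c LP0_bnd(3)[of b] OPT_pos by (smt (verit) of_nat_0_le_iff mult_nonneg_nonneg)
    moreover have "LP0 + Opt * real (cost n w a) \<le> LP0 + Opt * real (cost n w b)"
      using c by (simp add: mult_left_mono)
    ultimately show ?thesis using False by (auto simp: h_def)
  qed
qed

lemma nextP_Inv:
  assumes "Inv P" "length x' = n" shows "Inv (nextP P x')"
proof (cases "\<exists>y\<in>P. wd y x'")
  case True then show ?thesis using assms by (simp add: nextP_def)
next
  case False
  have "x' \<notin> P" using False by (auto simp: weakly_dom_def)
  then show ?thesis using assms False unfolding nextP_def Inv_def by auto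
qed

lemma Phi_nonneg: "Inv P \<Longrightarrow> Phi P \<ge> 0"
proof (cases "hit n E w P")
  case True
  then show ?thesis by (auto simp: Phi_def)
next
  case False
  assume "Inv P"
  then have "Min (h ` P) \<in> h ` P" by (intro Min_in) (auto simp: Inv_def)
  then show ?thesis using False h_nonneg by (auto simp: Phi_def)
qed

lemma Phi_le_h: "Inv P \<Longrightarrow> z \<in> P \<Longrightarrow> Phi P \<le> h z"
  using h_nonneg[of z] by (auto simp: Phi_def Inv_def intro!: Min_le)

lemma Phi_nextP:
  assumes "Inv P" "\<not> hit n E w P" "length x' = n"
  shows "Phi (nextP P x') \<le> Phi P" "Phi (nextP P x') \<le> h x'"
proof -
  have I': "Inv (nextP P x')" using nextP_Inv assms by blast
  have A: "\<forall>z\<in>P. \<exists>u\<in>nextP P x'. h u \<le> h z"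
  proof
    fix z assume z: "z \<in> P"
    show "\<exists>u\<in>nextP P x'. h u \<le> h z"
    proof (cases "\<exists>y\<in>P. wd y x'")
      case True then show ?thesis using z by (auto simp: nextP_def)
    next
      case False then show ?thesis using z h_mono[of x' z] by (cases "wd x' z") (auto simp: nextP_def)
    qed
  qed
  have B: "\<exists>u\<in>nextP P x'. h u \<le> h x'"
  proof (cases "\<exists>y\<in>P. wd y x'")
    case True then show ?thesis using h_mono by (auto simp: nextP_def)
  next
    case False then show ?thesis by (auto simp: nextP_def)
  qed
  have P: "Phi P = Min (h ` P)" using assms by (simp add: Phi_def)
  have "Min (h ` P) \<in> h ` P" using assms by (intro Min_in) (auto simp: Inv_def)
  then obtain z where z: "z \<in> P" "Phi P = h z" using P by auto
  show "Phi (nextP P x') \<le> Phi P"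
    using A z Phi_le_h[OF I'] by force
  show "Phi (nextP P x') \<le> h x'"
    using B Phi_le_h[OF I'] by force
qed

lemma Phi_attain: assumes "Inv P" "\<not> hit n E w P" shows "\<exists>x\<in>P. Phi P = h x"
proof -
  have "Min (h ` P) \<in> h ` P" using assms by (intro Min_in) (auto simp: Inv_def)
  then show ?thesis using assms by (auto simp: Phi_def)
qed

lemma noninv_cost: assumes "\<not> good x" shows "cost n w x \<ge> 1"
proof (rule ccontr)
  assume "\<not> ?thesis"
  then have "cost n w x = 0" by simp
  then show False using assms LP0_bnd(2) LP0_bnd(3)[of x] unfolding good_def by simp
qed

lemma Phi_ge_half:
  assumes "Inv P" "\<not> hit n E w P" shows "Phi P \<ge> 1/2"
proof -
  obtain x where x: "x \<in> P" "Phi P = h x" using Phi_attain assms by blast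
  show ?thesis
  proof (cases "good x")
    case True
    obtain k :: nat where k: "lp x = real k / 2" using LP_half by blast
    have "k \<noteq> 0"
    proof
      assume "k = 0"
      then have "lp x = 0" using k by simp
      then have "is_vc n E x" "real (cost n w x) \<le> 2 * Opt" using LP_zero_vc True by (auto simp: good_def)
      then have "hit n E w P" using x(1) unfolding hit_def by (auto simp del: of_nat_mult simp add: of_nat_mult[symmetric])
      then show False using assms by simp
    qed
    then show ?thesis using x True k by (simp add: h_def)
  next
    case False
    have "Opt * real (cost n w x) \<ge> 1 * 1"
      using noninv_cost[OF False] OPT_pos by (intro mult_mono) auto
    then show ?thesis using x False LP0_bnd by (simp add: h_def)
  qed
qed

lemma card_P: assumes "Inv P" shows "card P \<le> 2 * OPT n E w + 1"
proof -
  have inj: "inj_on lp P"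
  proof
    fix a b assume ab: "a \<in> P" "b \<in> P" "lp a = lp b"
    show "a = b"
    proof (rule ccontr)
      assume "a \<noteq> b"
      moreover have "wd a b \<or> wd b a" using ab by (auto simp: weakly_dom_def)
      ultimately show False using assms ab by (auto simp: Inv_def)
    qed
  qed
  have sub: "lp ` P \<subseteq> (\<lambda>k. real k / 2) ` {..2 * OPT n E w}"
  proof
    fix v assume "v \<in> lp ` P"
    then obtain x where "v = lp x" by auto
    moreover obtain k :: nat where k: "lp x = real k / 2" using LP_half by blast
    moreover have "real k / 2 \<le> Opt" using k LP0_bnd(2) LP0_bnd(3)[of x] by simp
    then have "k \<le> 2 * OPT n E w" by linarith
    ultimately show "v \<in> (\<lambda>k. real k / 2) ` {..2 * OPT n E w}" by auto
  qed
  have "card P = card (lp ` P)" using inj by (simp add: card_image)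
  also have "\<dots> \<le> card ((\<lambda>k. real k / 2) ` {..2 * OPT n E w})" using sub by (intro card_mono) auto
  also have "\<dots> \<le> card {..2 * OPT n E w}" by (rule card_image_le) auto
  finally show ?thesis by simp
qed


lemma drift:
  assumes "Inv P" "\<not> hit n E w P"
  shows "\<exists>x\<in>P. \<exists>I\<subseteq>{..<n}. \<exists>d. (\<forall>i\<in>I. 0 \<le> d i \<and> Phi (nextP P (x[i := \<not> x ! i])) \<le> Phi P - d i)
           \<and> Phi P / 2 \<le> sum d I"
proof -
  obtain x where x: "x \<in> P" "Phi P = h x" using Phi_attain assms by blast
  have lx: "length x = n" using x assms by (auto simp: Inv_def)
  show ?thesis
  proof (cases "good x")
    case True
    obtain y where y: "feas x y" "hi y" "lp x = obj x y" using LP_attain by blast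
    define I where "I = {v. v < n \<and> \<not> x ! v \<and> y v > 0}"
    define d where "d v = real (w v) * y v" for v
    have "\<forall>v\<in>I. 0 \<le> d v \<and> Phi (nextP P (x[v := \<not> x ! v])) \<le> Phi P - d v"
    proof
      fix v assume v: "v \<in> I"
      have v1: "v < n" "\<not> x ! v" "y v > 0" using v by (auto simp: I_def)
      have yv: "y v \<ge> 1/2" "y v \<le> 1" using y(1,2) v1 by (auto simp: hi_def feas_def)
      have xv: "x[v := \<not> x ! v] = x[v := True]" using v1 by simp
      have c: "cost n w (x[v := True]) = cost n w x + w v" using cost_set_true lx v1 by blast
      have l: "lp (x[v := True]) \<le> lp x - real (w v) * y v" using LP_add[OF lx v1(1,2) y(1)] y(3) by simp
      have "real (w v) \<le> 2 * (real (w v) * y v)" 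
      proof -
        have "real (w v) * 1 \<le> real (w v) * (2 * y v)" using yv by (intro mult_left_mono) auto
        then show ?thesis by (simp add: algebra_simps)
      qed
      then have g: "good (x[v := True])" using True c l unfolding good_def by simp
      have "Phi (nextP P (x[v := True])) \<le> h (x[v := True])"
        using Phi_nextP(2)[OF assms] lx by simp
      also have "\<dots> \<le> Phi P - d v" using g l x(2) True by (simp add: h_def d_def)
      finally show "0 \<le> d v \<and> Phi (nextP P (x[v := \<not> x ! v])) \<le> Phi P - d v"
        using xv yv by (simp add: d_def)
    qed
    moreover have "sum d I = obj x y"
      unfolding obj_def d_def
    proof (rule sum.mono_neutral_left)
      show "\<forall>i\<in>U x - I. real (w i) * y i = 0" using y(1) by (force simp: U_def I_def feas_def)
    qed (auto simp: I_def U_def)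
    moreover have "Phi P \<ge> 0" using Phi_nonneg assms by blast
    moreover have "I \<subseteq> {..<n}" by (auto simp: I_def)
    ultimately show ?thesis using x y(3) True by (intro bexI[OF _ x(1)] exI[of _ I]) (auto simp: h_def)
  next
    case False
    define I where "I = {v. v < n \<and> x ! v}"
    define d where "d v = Opt * real (w v)" for v
    have "\<forall>v\<in>I. 0 \<le> d v \<and> Phi (nextP P (x[v := \<not> x ! v])) \<le> Phi P - d v"
    proof
      fix v assume v: "v \<in> I"
      have v1: "v < n" "x ! v" using v by (auto simp: I_def)
      have xv: "x[v := \<not> x ! v] = x[v := False]" using v1 by simp
      have c: "cost n w (x[v := False]) + w v = cost n w x" using cost_set_false lx v1 by blast
      have "h (x[v := False]) \<le> LP0 + Opt * real (cost n w (x[v := False]))"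
      proof -
        have A: "0 \<le> Opt * real (cost n w (x[v := False]))" by simp
        have B: "lp (x[v := False]) \<le> LP0" using LP0_bnd(3) by blast
        show ?thesis
        proof (cases "good (x[v := False])")
          case True then have "h (x[v := False]) = lp (x[v := False])" by (simp add: h_def)
          then show ?thesis using A B by linarith
        next
          case False then show ?thesis by (simp add: h_def)
        qed
      qed
      also have "\<dots> = Phi P - d v"
      proof -
        have "real (cost n w x) = real (cost n w (x[v := False])) + real (w v)"
          using c by (simp flip: of_nat_add)
        then show ?thesis using x(2) False by (simp add: h_def d_def algebra_simps)
      qed
      finally have "h (x[v := False]) \<le> Phi P - d v" .
      moreover have "Phi (nextP P (x[v := False])) \<le> h (x[v := False])"
        using Phi_nextP(2)[OF assms] lx by simp
      ultimately show "0 \<le> d v \<and> Phi (nextP P (x[v := \<not> x ! v])) \<le> Phi P - d v"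
        using xv by (simp add: d_def)
    qed
    moreover have "sum d I = Opt * real (cost n w x)"
      unfolding d_def I_def cost_ones by (simp add: sum_distrib_left)
    moreover have "Phi P \<le> 2 * (Opt * real (cost n w x))"
    proof -
      have "Opt * 1 \<le> Opt * real (cost n w x)" using noninv_cost[OF False] by (intro mult_left_mono) auto
      then show ?thesis using x(2) False LP0_bnd(2) by (simp add: h_def)
    qed
    moreover have "I \<subseteq> {..<n}" by (auto simp: I_def)
    ultimately show ?thesis by (intro bexI[OF _ x(1)] exI[of _ I]) auto
  qed
qed


lemma fin_mut: "finite (set_pmf (mutate p x))"
proof -
  have "finite {l::bool list. length l = length x}"
    using finite_lists_length_eq[of "UNIV::bool set" "length x"] by simp
  then show ?thesis using set_mutate by (rule finite_subset[rotated])
qed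

lemma flip_inj: "i < length x \<Longrightarrow> j < length x \<Longrightarrow> x[i := \<not> x ! i] = x[j := \<not> x ! j] \<Longrightarrow> i = j"
  by (metis nth_list_update_eq nth_list_update_neq)

lemma mut_step:
  assumes P: "Inv P" "\<not> hit n E w P" "x \<in> P" "I \<subseteq> {..<n}"
    and d: "\<forall>i\<in>I. 0 \<le> d i \<and> Phi (nextP P (x[i := \<not> x ! i])) \<le> Phi P - d i"
  defines "q \<equiv> (\<Sum>i\<in>I. d i * pmf (mutate (1 / real n) x) (x[i := \<not> x ! i]))"
  shows "(\<integral>\<^sup>+a. ennreal (Phi (nextP P a)) \<partial>mutate (1 / real n) x) \<le> ennreal (Phi P - q)"
    and "q \<le> Phi P"
proof -
  have lx: "length x = n" using P by (auto simp: Inv_def)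
  have finI: "finite I" using P(4) finite_subset by blast
  have g: "\<forall>a\<in>set_pmf (mutate (1 / real n) x). 0 \<le> Phi (nextP P a) \<and>
     Phi (nextP P a) \<le> Phi P - (\<Sum>i\<in>I. if a = x[i := \<not> x ! i] then d i else 0)"
  proof
    fix a assume a: "a \<in> set_pmf (mutate (1 / real n) x)"
    then have la: "length a = n" using set_mutate lx by blast
    have nn: "0 \<le> Phi (nextP P a)" using nextP_Inv[OF P(1) la] Phi_nonneg by blast
    show "0 \<le> Phi (nextP P a) \<and> Phi (nextP P a) \<le> Phi P - (\<Sum>i\<in>I. if a = x[i := \<not> x ! i] then d i else 0)"
    proof (cases "\<exists>j\<in>I. a = x[j := \<not> x ! j]")
      case True
      then obtain j where j: "j \<in> I" "a = x[j := \<not> x ! j]" by blast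
      have "(\<Sum>i\<in>I. if a = x[i := \<not> x ! i] then d i else 0) = (\<Sum>i\<in>I. if i = j then d i else 0)"
      proof (rule sum.cong[OF refl])
        fix i assume i: "i \<in> I"
        have "i < length x" "j < length x" using i j(1) P(4) lx by auto
        then have "(a = x[i := \<not> x ! i]) = (i = j)"
        proof -
          assume l: "i < length x" "j < length x"
          have "a = x[i := \<not> x ! i] \<Longrightarrow> i = j"
            using flip_inj[OF l] unfolding j(2) by (metis (no_types))
          then show ?thesis using j(2) by blast
        qed
        then show "(if a = x[i := \<not> x ! i] then d i else 0) = (if i = j then d i else 0)" by simp
      qed
      also have "\<dots> = d j" using finI j by simp
      finally show ?thesis using nn d j by simp
    next
      case False
      then have "\<forall>i\<in>I. (if a = x[i := \<not> x ! i] then d i else 0) = 0" by auto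
      then have "(\<Sum>i\<in>I. if a = x[i := \<not> x ! i] then d i else 0) = 0" by (rule sum.neutral)
      then show ?thesis using nn Phi_nextP(1)[OF P(1,2) la] by simp
    qed
  qed
  show "(\<integral>\<^sup>+a. ennreal (Phi (nextP P a)) \<partial>mutate (1 / real n) x) \<le> ennreal (Phi P - q)"
    unfolding q_def by (rule exp_bound(1)[where M="mutate (1 / real n) x" and I=I and g="\<lambda>a. Phi (nextP P a)" and c="Phi P" and f="\<lambda>i. x[i := \<not> x ! i]" and d=d, OF fin_mut finI g])
  show "q \<le> Phi P"
    unfolding q_def by (rule exp_bound(2)[where M="mutate (1 / real n) x" and I=I and g="\<lambda>a. Phi (nextP P a)" and c="Phi P" and f="\<lambda>i. x[i := \<not> x ! i]" and d=d, OF fin_mut finI g])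
qed

lemma mut_const:
  assumes P: "Inv P" "\<not> hit n E w P" "z \<in> P"
  shows "(\<integral>\<^sup>+a. ennreal (Phi (nextP P a)) \<partial>mutate (1 / real n) z) \<le> ennreal (Phi P)"
proof -
  have lz: "length z = n" using P by (auto simp: Inv_def)
  have g: "\<forall>a\<in>set_pmf (mutate (1 / real n) z). 0 \<le> Phi (nextP P a) \<and>
     Phi (nextP P a) \<le> Phi P - (\<Sum>i\<in>{}. if a = id i then (0::real) else 0)"
  proof
    fix a assume a: "a \<in> set_pmf (mutate (1 / real n) z)"
    then have la: "length a = n" using set_mutate lz by blast
    show "0 \<le> Phi (nextP P a) \<and> Phi (nextP P a) \<le> Phi P - (\<Sum>i\<in>{}. if a = id i then (0::real) else 0)"
      using nextP_Inv[OF P(1) la] Phi_nonneg Phi_nextP(1)[OF P(1,2) la] by simp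
  qed
  show ?thesis using exp_bound(1)[OF fin_mut _ g] by simp
qed

definition "delta = 1 / (2 * exp 1 * real n * (2 * Opt + 1))"

lemma semo_step_eq: "semo_step n E w P = bind_pmf (pmf_of_set P) (\<lambda>x. map_pmf (nextP P) (mutate (1 / real n) x))"
  unfolding semo_step_def by (simp add: nextP_def[abs_def])

lemma step_exp:
  assumes P: "Inv P"
  shows "(\<integral>\<^sup>+Q. ennreal (Phi Q) \<partial>(if hit n E w P then return_pmf P else semo_step n E w P))
          \<le> ennreal ((1 - delta) * Phi P)"
proof (cases "hit n E w P")
  case True
  then show ?thesis by (simp add: Phi_def)
next
  case nh: False
  obtain x I d where xI: "x \<in> P" "I \<subseteq> {..<n}"
    and d: "\<forall>i\<in>I. 0 \<le> d i \<and> Phi (nextP P (x[i := \<not> x ! i])) \<le> Phi P - d i"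
    and dsum: "Phi P / 2 \<le> sum d I"
    using drift[OF P nh] by blast
  define M where "M z = mutate (1 / real n) z" for z
  define T where "T z = (\<integral>\<^sup>+a. ennreal (Phi (nextP P a)) \<partial>M z)" for z
  define q where "q = (\<Sum>i\<in>I. d i * pmf (M x) (x[i := \<not> x ! i]))"
  have Tx: "T x \<le> ennreal (Phi P - q)" and q: "q \<le> Phi P"
    using mut_step[OF P nh xI d] unfolding T_def q_def M_def by auto
  have Tz: "T z \<le> ennreal (Phi P)" if "z \<in> P" for z
    using mut_const[OF P nh that] unfolding T_def M_def .
  have finP: "finite P" and cP: "card P \<ge> 1" using P by (auto simp: Inv_def Suc_le_eq card_gt_0_iff)
  have Phi0: "Phi P \<ge> 0" using Phi_nonneg P by blast
  have "(\<integral>\<^sup>+Q. ennreal (Phi Q) \<partial>semo_step n E w P) = (\<Sum>z\<in>P. T z) / of_nat (card P)"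
    unfolding semo_step_eq T_def M_def using P by (simp add: Inv_def nn_integral_pmf_of_set)
  also have "(\<Sum>z\<in>P. T z) = T x + (\<Sum>z\<in>P - {x}. T z)"
    using finP xI by (simp add: sum.remove)
  also have "\<dots> \<le> ennreal (Phi P - q) + (\<Sum>z\<in>P - {x}. ennreal (Phi P))"
    using Tx Tz by (intro add_mono sum_mono) auto
  also have "\<dots> = ennreal (Phi P - q + real (card P - 1) * Phi P)"
    using q Phi0 finP xI by (simp add: ennreal_mult' card_Diff_singleton ennreal_of_nat_eq_real_of_nat)
  also have "\<dots> = ennreal (real (card P) * Phi P - q)"
    using cP by (simp add: of_nat_diff algebra_simps)
  finally have A: "(\<integral>\<^sup>+Q. ennreal (Phi Q) \<partial>semo_step n E w P)
      \<le> ennreal (real (card P) * Phi P - q) / ennreal (real (card P))"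
    by (metis divide_right_mono_ennreal ennreal_of_nat_eq_real_of_nat)
  also have "\<dots> = ennreal (Phi P - q / real (card P))"
  proof -
    have "Phi P \<le> real (card P) * Phi P" using mult_right_mono[of 1 "real (card P)" "Phi P"] cP Phi0 by simp
    then show ?thesis using cP q Phi0 by (subst divide_ennreal) (auto simp: field_simps)
  qed
  also have "\<dots> \<le> ennreal ((1 - delta) * Phi P)"
  proof (rule ennreal_leI)
    have nn: "n \<ge> 2" using n_ge2 .
    define pi where "pi = exp (-1) / real n"
    have pf: "pmf (M x) (x[i := \<not> x ! i]) \<ge> pi" if "i \<in> I" for i
    proof -
      have lx: "length x = n" using P xI by (auto simp: Inv_def)
      have "pmf (M x) (x[i := \<not> x ! i]) = (1 / real n) * (1 - 1 / real n) ^ (n - 1)"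
        unfolding M_def using that xI lx nn by (subst pmf_mutate_flip) auto
      also have "\<dots> \<ge> (1 / real n) * exp (-1)"
        using one_minus_pow_ge[OF nn] by (intro mult_left_mono) auto
      finally show ?thesis by (simp add: pi_def)
    qed
    have "pi * (Phi P / 2) \<le> pi * sum d I" using dsum by (intro mult_left_mono) (auto simp: pi_def)
    also have "\<dots> = (\<Sum>i\<in>I. d i * pi)" by (simp add: sum_distrib_left mult.commute)
    also have "\<dots> \<le> q" unfolding q_def using d pf by (intro sum_mono mult_left_mono) auto
    finally have q1: "pi * (Phi P / 2) \<le> q" .
    have cP2: "real (card P) \<le> 2 * Opt + 1" using card_P[OF P] by linarith
    have "delta * Phi P = pi * (Phi P / 2) / (2 * Opt + 1)"
      unfolding delta_def pi_def using OPT_pos by (simp add: exp_minus field_simps)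
    also have "\<dots> \<le> q / (2 * Opt + 1)" using q1 OPT_pos by (intro divide_right_mono) auto
    also have "\<dots> \<le> q / real (card P)"
      using cP cP2 q1 Phi0 by (intro divide_left_mono) (auto simp: pi_def intro: order.trans[rotated])
    finally show "Phi P - q / real (card P) \<le> (1 - delta) * Phi P" by (simp add: algebra_simps)
  qed
  finally show ?thesis using nh by simp
qed


lemma Inv_single: "length x = n \<Longrightarrow> Inv {x}" by (simp add: Inv_def)

lemma lists_fin: "finite {x::bool list. length x = n}"
  using finite_lists_length_eq[of "UNIV::bool set" n] by simp

lemma lists_ne: "{x::bool list. length x = n} \<noteq> {}"
  by (auto intro: exI[of _ "replicate n False"])

lemma run_Inv: "P \<in> set_pmf (semo_run n E w t) \<Longrightarrow> Inv P"
proof (induction t arbitrary: P)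
  case 0
  then obtain x where "P = {x}" "length x = n" using lists_fin lists_ne by auto
  then show ?case using Inv_single by simp
next
  case (Suc t)
  then obtain Q where Q: "Q \<in> set_pmf (semo_run n E w t)"
    and P: "P \<in> set_pmf (if hit n E w Q then return_pmf Q else semo_step n E w Q)" by auto
  have IQ: "Inv Q" using Suc.IH Q by blast
  show ?case
  proof (cases "hit n E w Q")
    case True then show ?thesis using P IQ by simp
  next
    case False
    then have "P \<in> set_pmf (semo_step n E w Q)" using P by simp
    then obtain x x' where "x \<in> Q" "x' \<in> set_pmf (mutate (1 / real n) x)" "P = nextP Q x'"
      using IQ unfolding semo_step_eq by (auto simp: Inv_def)
    moreover have "length x = n" using IQ \<open>x \<in> Q\<close> by (auto simp: Inv_def)
    ultimately show ?thesis using nextP_Inv[OF IQ] set_mutate by blast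
  qed
qed

definition "Et t = (\<integral>\<^sup>+P. ennreal (Phi P) \<partial>semo_run n E w t)"
definition "B = Opt + Opt * real n * real Wm"

lemma delta_bnd: "0 < delta" "delta \<le> 1"
proof -
  define D where "D = 2 * exp 1 * real n * (2 * Opt + 1)"
  have "1 \<le> D"
  proof -
    have "1 \<le> exp (1::real)" by simp
    moreover have "1 \<le> real n" using n_ge2 by simp
    moreover have "1 \<le> 2 * Opt + 1" by simp
    ultimately have "1 * 1 * 1 \<le> exp 1 * real n * (2 * Opt + 1)"
      by (intro mult_mono) auto
    then show ?thesis unfolding D_def by simp
  qed
  then have "0 < 1 / D" "1 / D \<le> 1" by auto
  then show "0 < delta" "delta \<le> 1" unfolding delta_def D_def by auto
qed

lemma Et_step: "Et (Suc t) \<le> ennreal (1 - delta) * Et t"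
proof -
  have "Et (Suc t) = (\<integral>\<^sup>+P. (\<integral>\<^sup>+Q. ennreal (Phi Q) \<partial>(if hit n E w P then return_pmf P else semo_step n E w P)) \<partial>semo_run n E w t)"
    unfolding Et_def by simp
  also have "\<dots> \<le> (\<integral>\<^sup>+P. ennreal ((1 - delta) * Phi P) \<partial>semo_run n E w t)"
  proof (rule nn_integral_mono_AE)
    have "\<forall>P\<in>set_pmf (semo_run n E w t). (\<integral>\<^sup>+Q. ennreal (Phi Q) \<partial>(if hit n E w P then return_pmf P else semo_step n E w P)) \<le> ennreal ((1 - delta) * Phi P)"
      using step_exp run_Inv by blast
    then show "AE P in measure_pmf (semo_run n E w t). (\<integral>\<^sup>+Q. ennreal (Phi Q) \<partial>(if hit n E w P then return_pmf P else semo_step n E w P)) \<le> ennreal ((1 - delta) * Phi P)"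
      by (simp add: AE_measure_pmf_iff del: nn_integral_return_pmf)
  qed
  also have "\<dots> = (\<integral>\<^sup>+P. ennreal (1 - delta) * ennreal (Phi P) \<partial>semo_run n E w t)"
    using delta_bnd by (simp add: ennreal_mult')
  also have "\<dots> = ennreal (1 - delta) * Et t"
    unfolding Et_def by (simp add: nn_integral_cmult)
  finally show ?thesis .
qed

lemma Et0: "Et 0 \<le> ennreal B"
proof -
  have "Et 0 = (\<integral>\<^sup>+x. ennreal (Phi {x}) \<partial>pmf_of_set {x. length x = n})"
    unfolding Et_def by simp
  also have "\<dots> \<le> (\<integral>\<^sup>+x. ennreal B \<partial>pmf_of_set {x::bool list. length x = n})"
  proof (rule nn_integral_mono_AE)
   have "\<forall>x\<in>{x::bool list. length x = n}. ennreal (Phi {x}) \<le> ennreal B"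
   proof (intro ballI ennreal_leI)
    fix x assume "x \<in> {x::bool list. length x = n}"
    then have lx: "length x = n" by simp
    have "Phi {x} \<le> h x" using Phi_le_h[OF Inv_single[OF lx]] by simp
    also have "h x \<le> B"
    proof -
      have c: "real (cost n w x) \<le> real n * real Wm"
        using cost_le[of x] sumw_le by (simp flip: of_nat_mult)
      have "Opt * real (cost n w x) \<le> Opt * (real n * real Wm)" using c by (intro mult_left_mono) auto
      moreover have "0 \<le> Opt * real n * real Wm" by simp
      moreover note LP0_bnd(2) LP0_bnd(3)[of x]
      ultimately show ?thesis
      proof (cases "good x")
        case True
        then have "h x = lp x" by (simp add: h_def)
        then show ?thesis using \<open>0 \<le> Opt * real n * real Wm\<close> LP0_bnd(2) LP0_bnd(3)[of x] unfolding B_def by linarith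
      next
        case False
        then have "h x = LP0 + Opt * real (cost n w x)" by (simp add: h_def)
        then show ?thesis using \<open>Opt * real (cost n w x) \<le> Opt * (real n * real Wm)\<close> LP0_bnd(2) unfolding B_def by (simp add: algebra_simps)
      qed
    qed
    finally show "Phi {x} \<le> B" .
   qed
   then show "AE x in measure_pmf (pmf_of_set {x::bool list. length x = n}). ennreal (Phi {x}) \<le> ennreal B"
     using lists_fin lists_ne by (simp add: AE_measure_pmf_iff)
  qed
  also have "\<dots> = ennreal B" by (simp add: measure_pmf.emeasure_space_1)
  finally show ?thesis .
qed

lemma Et_bound: "Et t \<le> ennreal ((1 - delta) ^ t * B)"
proof (induction t)
  case 0 then show ?case using Et0 by simp
next
  case (Suc t)
  have "Et (Suc t) \<le> ennreal (1 - delta) * Et t" by (rule Et_step)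
  also have "\<dots> \<le> ennreal (1 - delta) * ennreal ((1 - delta) ^ t * B)"
    using Suc by (intro mult_left_mono) auto
  also have "\<dots> = ennreal ((1 - delta) ^ Suc t * B)"
    using delta_bnd by (simp add: ennreal_mult'[symmetric] algebra_simps)
  finally show ?case .
qed

lemma prob_bound: "measure_pmf.prob (semo_run n E w t) {P. \<not> hit n E w P} \<le> 2 * (1 - delta) ^ t * B"
proof -
  have "ennreal (measure_pmf.prob (semo_run n E w t) {P. \<not> hit n E w P})
        = (\<integral>\<^sup>+P. indicator {P. \<not> hit n E w P} P \<partial>semo_run n E w t)"
    by (simp add: measure_pmf.emeasure_eq_measure[symmetric])
  also have "\<dots> \<le> (\<integral>\<^sup>+P. ennreal 2 * ennreal (Phi P) \<partial>semo_run n E w t)"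
  proof (rule nn_integral_mono_AE, unfold AE_measure_pmf_iff, intro ballI)
    fix P assume "P \<in> set_pmf (semo_run n E w t)"
    then have I: "Inv P" by (rule run_Inv)
    show "indicator {P. \<not> hit n E w P} P \<le> ennreal 2 * ennreal (Phi P)"
    proof (cases "hit n E w P")
      case True then show ?thesis by simp
    next
      case False
      then have "1 \<le> 2 * Phi P" using Phi_ge_half[OF I] by simp
      then have "ennreal 1 \<le> ennreal (2 * Phi P)" by (rule ennreal_leI)
      then show ?thesis using False by (simp add: ennreal_mult')
    qed
  qed
  also have "\<dots> = ennreal 2 * Et t" unfolding Et_def by (simp add: nn_integral_cmult)
  also have "\<dots> \<le> ennreal 2 * ennreal ((1 - delta) ^ t * B)" using Et_bound by (intro mult_left_mono) auto
  also have "\<dots> = ennreal (2 * (1 - delta) ^ t * B)" by (simp add: ennreal_mult' algebra_simps)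
  finally show ?thesis
    using delta_bnd by (subst (asm) ennreal_le_iff) (auto simp: B_def)
qed

end


context wvc begin

lemma final_bound:
  "expected_time n E w \<le> ennreal (200 * Opt * real n * (ln (real Wm) + ln (real n)))"
proof -
  define K where "K = 2 * B"
  have Opt1: "1 \<le> Opt" using OPT_pos by simp
  have n2: "2 \<le> real n" using n_ge2 by simp
  have W1: "1 \<le> real Wm" using Wm_pos by simp
  have OptW: "Opt \<le> real n * real Wm" using OPT_le by (simp flip: of_nat_mult)
  have nW1: "1 \<le> real n * real Wm" using n2 W1 by (metis dual_order.trans mult_1_left mult_mono one_le_numeral zero_le_one of_nat_0_le_iff)
  have K1: "1 \<le> K"
  proof -
    have "0 \<le> Opt * real n * real Wm" by simp
    then show ?thesis using Opt1 unfolding K_def B_def by (simp only: distrib_left)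
  qed
  have p: "measure_pmf.prob (semo_run n E w t) {P. \<not> hit n E w P} \<le> K * (1 - delta) ^ t" for t
    using prob_bound[of t] by (simp add: K_def algebra_simps)
  have "expected_time n E w \<le> ennreal (1 / delta + ln K / delta + 1)"
    unfolding expected_time_def
    by (rule sum_bound[OF _ _ p refl delta_bnd K1]) auto
  moreover have "1 / delta + ln K / delta + 1 \<le> 200 * Opt * real n * (ln (real Wm) + ln (real n))"
  proof -
    define L where "L = ln (real Wm) + ln (real n)"
    have lnW: "0 \<le> ln (real Wm)" using W1 by simp
    have ln2: "1/2 \<le> ln (2::real)"
    proof -
      have "exp (1/2::real) \<le> 1 + 2 * (1/2)" by (rule real_exp_bound_lemma) auto
      then show ?thesis by (subst ln_ge_iff) auto
    qed
    have lnn: "ln 2 \<le> ln (real n)" using n2 by simp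
    have L: "1/2 \<le> L" using lnW ln2 lnn unfolding L_def by linarith
    have inv_d: "1 / delta \<le> 18 * real n * Opt"
    proof -
      have "1 / delta = 2 * exp 1 * real n * (2 * Opt + 1)" by (simp add: delta_def)
      also have "\<dots> \<le> 2 * 3 * real n * (3 * Opt)"
        using exp_le Opt1 n2 by (intro mult_mono) auto
      finally show ?thesis by simp
    qed
    have lnK: "ln K \<le> 4 * L"
    proof -
      have "K \<le> 2 * (Opt + Opt * (real n * real Wm))" unfolding K_def B_def by (simp add: algebra_simps)
      also have "\<dots> \<le> 2 * (Opt * (real n * real Wm) + Opt * (real n * real Wm))"
        using nW1 Opt1 by (intro mult_left_mono add_mono) (auto intro: mult_left_mono[of 1, simplified])
      also have "\<dots> = 4 * Opt * (real n * real Wm)" by simp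
      also have "\<dots> \<le> 4 * (real n * real Wm) * (real n * real Wm)"
        using OptW by (intro mult_right_mono) auto
      also have "\<dots> \<le> real n ^ 4 * real Wm ^ 2"
      proof -
        have "4 \<le> real n ^ 2" using n2 power_mono[of 2 "real n" 2] by simp
        then have "4 * real Wm ^ 2 \<le> real n ^ 2 * real Wm ^ 2" by (intro mult_right_mono) auto
        then have "4 * real Wm ^ 2 * real n ^ 2 \<le> real n ^ 2 * real Wm ^ 2 * real n ^ 2"
          using mult_right_mono[of "4 * real Wm ^ 2" "real n ^ 2 * real Wm ^ 2" "real n ^ 2"] by simp
        then show ?thesis by (simp add: power2_eq_square power4_eq_xxxx algebra_simps)
      qed
      finally have "ln K \<le> ln (real n ^ 4 * real Wm ^ 2)" using K1 by simp
      also have "\<dots> = 4 * ln (real n) + 2 * ln (real Wm)" using n2 W1 by (simp add: ln_mult ln_realpow)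
      also have "\<dots> \<le> 4 * L" using lnW unfolding L_def by simp
      finally show ?thesis .
    qed
    have lnK0: "0 \<le> ln K" using K1 by simp
    have "1 / delta + ln K / delta + 1 = (1 + ln K) * (1 / delta) + 1" by (simp add: add_divide_distrib)
    also have "\<dots> \<le> (6 * L) * (18 * real n * Opt) + 2 * L * (real n * Opt)"
    proof (intro add_mono mult_mono)
      show "1 + ln K \<le> 6 * L" using lnK L by linarith
      show "1 \<le> 2 * L * (real n * Opt)"
      proof -
        have "1 * 1 \<le> (2 * L) * (real n * Opt)" using L n2 Opt1
          by (intro mult_mono) (auto intro: order.trans[of 1 "real n * 1"] mult_mono)
        then show ?thesis by simp
      qed
    qed (use inv_d lnK0 L delta_bnd in auto)
    also have "\<dots> = 110 * Opt * real n * L" by (simp add: algebra_simps)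
    also have "\<dots> \<le> 200 * Opt * real n * L" using L Opt1 n2 by (intro mult_right_mono) auto
    finally show ?thesis unfolding L_def .
  qed
  ultimately show ?thesis by (meson ennreal_leI order.trans)
qed

end

theorem theorem2:
  "\<exists>c::real. c > 0 \<and>
     (\<forall>(n::nat) (E::nat set set) (w::nat \<Rightarrow> nat).
        wf_graph n E w \<and> E \<noteq> {} \<longrightarrow>
        expected_time n E w
          \<le> ennreal (c * real (OPT n E w) * real n * (ln (real (Wmax n w)) + ln (real n))))"
proof (intro exI[of _ 200] conjI allI impI)
  fix n E w assume "wf_graph n E w \<and> E \<noteq> {}"
  then interpret wvc n E w by unfold_locales auto
  show "expected_time n E w
          \<le> ennreal (200 * real (OPT n E w) * real n * (ln (real (Wmax n w)) + ln (real n)))"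
    using final_bound by (simp add: Wm_def)
qed simp

end
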